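(* Let $(H,\lambda)$ be a friendly pair such that no row of $H$ is zero or a multiple of another row, and fix any $u\in\mathbb{R}^{n+1}_{>0}$. Then $(H,\lambda)$ is a Horn pair if and only if $\lambda_i(Hu)^{h_i}>0$ for $i=0,1,\dots,n$. If this holds, then the nonzero entries in each row of $H$ have the same sign; in particular the sign vector $\sigma=\mathrm{sign}(Hu)$ is independent of the choice of $u\in\mathbb{R}^{n+1}_{>0}$.
   Context: A Horn matrix is an $m\times(n+1)$ integer matrix $H=(h_{ij})$ whose columns $h_0,\dots,h_n$ sum to zero; write $(Hu)^{h_i}=\prod_{j=1}^m(\sum_k h_{jk}u_k)^{h_{ji}}$. $(H,\lambda)$ is a friendly pair if $\lambda\in\mathbb{R}^{n+1}$ has nonzero entries and $\sum_{i=0}^n\lambda_i(Hu)^{h_i}=1$ identically in $\mathbb{R}(u_0,\dots,u_n)$. A friendly pair is a Horn pair if no row of $H$ is zero or a multiple of another row, and the rational map $u\mapsto(\lambda_0(Hu)^{h_0},\dots,\lambda_n(Hu)^{h_n})$ is defined for all positive vectors and maps them to positive vectors. *)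

theory Defs
  imports Complex_Main
begin

text \<open>An m x (n+1) integer matrix H is represented as H :: nat => nat => int,
  with rows j < m and columns k \<le> n (indices 0..n). Vectors u, lambda : nat => real,
  components 0..n.\<close>

definition linform :: "(nat \<Rightarrow> nat \<Rightarrow> int) \<Rightarrow> nat \<Rightarrow> (nat \<Rightarrow> real) \<Rightarrow> nat \<Rightarrow> real" where
  "linform H n u j = (\<Sum>k\<le>n. real_of_int (H j k) * u k)"

definition hmono :: "(nat \<Rightarrow> nat \<Rightarrow> int) \<Rightarrow> nat \<Rightarrow> nat \<Rightarrow> (nat \<Rightarrow> real) \<Rightarrow> nat \<Rightarrow> real" where
  "hmono H m n u i = (\<Prod>j<m. (linform H n u j) powi (H j i))"

definition horn_matrix :: "(nat \<Rightarrow> nat \<Rightarrow> int) \<Rightarrow> nat \<Rightarrow> nat \<Rightarrow> bool" where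
  "horn_matrix H m n \<longleftrightarrow> (\<forall>i\<le>n. (\<Sum>j<m. H j i) = 0)"

text \<open>Identity of rational functions in R(u_0..u_n), expressed as equality at every point
  where all (not identically zero) linear forms (Hu)_j are nonzero (a Zariski-dense set).\<close>
definition friendly_pair :: "(nat \<Rightarrow> nat \<Rightarrow> int) \<Rightarrow> nat \<Rightarrow> nat \<Rightarrow> (nat \<Rightarrow> real) \<Rightarrow> bool" where
  "friendly_pair H m n lam \<longleftrightarrow> horn_matrix H m n \<and> (\<forall>i\<le>n. lam i \<noteq> 0) \<and>
     (\<forall>u. (\<forall>j<m. (\<exists>k\<le>n. H j k \<noteq> 0) \<longrightarrow> linform H n u j \<noteq> 0) \<longrightarrow>
          (\<Sum>i\<le>n. lam i * hmono H m n u i) = 1)"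

definition rows_nondegenerate :: "(nat \<Rightarrow> nat \<Rightarrow> int) \<Rightarrow> nat \<Rightarrow> nat \<Rightarrow> bool" where
  "rows_nondegenerate H m n \<longleftrightarrow>
     (\<forall>j<m. (\<exists>k\<le>n. H j k \<noteq> 0) \<and>
        (\<forall>j'<m. j' \<noteq> j \<longrightarrow> \<not> (\<exists>c::real. \<forall>k\<le>n. real_of_int (H j k) = c * real_of_int (H j' k))))"

text \<open>The rational map is defined at u iff no factor with negative exponent vanishes
  (the monomial in the pairwise non-proportional linear forms is reduced).\<close>
definition horn_pair :: "(nat \<Rightarrow> nat \<Rightarrow> int) \<Rightarrow> nat \<Rightarrow> nat \<Rightarrow> (nat \<Rightarrow> real) \<Rightarrow> bool" where
  "horn_pair H m n lam \<longleftrightarrow> friendly_pair H m n lam \<and> rows_nondegenerate H m n \<and>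
     (\<forall>u. (\<forall>k\<le>n. u k > 0) \<longrightarrow>
        (\<forall>i\<le>n. \<forall>j<m. H j i < 0 \<longrightarrow> linform H n u j \<noteq> 0) \<and>
        (\<forall>i\<le>n. lam i * hmono H m n u i > 0))"

end

theory Submission
  imports Defs "HOL-Computational_Algebra.Polynomial"
begin


lemma linform_lin:
  "linform H n (\<lambda>k. x * u k + y * w k) j = x * linform H n u j + y * linform H n w j"
  unfolding linform_def by (simp add: algebra_simps sum.distrib sum_distrib_left)

lemma lin_u_nonzero:
  assumes "rows_nondegenerate H m n" "\<forall>i\<le>n. lam i * hmono H m n u i > 0" "j < m"
  shows "linform H n u j \<noteq> 0"
proof
  assume z: "linform H n u j = 0"
  from assms(1,3) obtain i where i: "i \<le> n" "H j i \<noteq> 0"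
    unfolding rows_nondegenerate_def by blast
  have "hmono H m n u i = 0" unfolding hmono_def
    by (rule prod_zero) (use assms(3) z i in auto)
  then show False using assms(2) i by auto
qed

lemma hmono_scale:
  assumes "\<forall>j<m. linform H n u j \<noteq> 0"
  shows "hmono H m n v i = hmono H m n u i *
     (\<Prod>j<m. (linform H n v j / linform H n u j) powi H j i)"
  unfolding hmono_def prod.distrib[symmetric] power_int_mult_distrib[symmetric]
  by (rule prod.cong) (use assms in auto)

lemma powi_ge_inv:
  fixes y :: real
  assumes "0 < y" "y < 1" "e < 0"
  shows "y powi e \<ge> 1 / y"
proof -
  define k where "k = nat (- e)"
  have ek: "e = - int k" and k1: "1 \<le> k" using assms(3) unfolding k_def by auto
  have "y ^ k \<le> y ^ 1" by (rule power_decreasing) (use assms k1 in auto)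
  moreover have "0 < y ^ k" using assms by simp
  ultimately have "1 / y \<le> 1 / y ^ k"
    by (simp add: frac_le)
  also have "1 / y ^ k = y powi e" unfolding ek
    by (simp add: power_int_minus divide_inverse)
  finally show ?thesis .
qed

lemma row_pos:
  assumes "\<forall>k\<le>n. H j k \<ge> 0" "\<exists>k\<le>n. H j k \<noteq> 0" "\<forall>k\<le>n. v k > 0"
  shows "linform H n v j > 0"
proof -
  obtain k where k: "k \<le> n" "H j k \<noteq> 0" using assms(2) by blast
  show ?thesis unfolding linform_def
    by (rule sum_pos2[of _ k]) (use assms k in \<open>auto intro!: mult_nonneg_nonneg mult_pos_pos simp: less_le\<close>)
qed

lemma row_neg:
  assumes "\<forall>k\<le>n. H j k \<le> 0" "\<exists>k\<le>n. H j k \<noteq> 0" "\<forall>k\<le>n. v k > 0"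
  shows "linform H n v j < 0"
proof -
  obtain k where k: "k \<le> n" "H j k \<noteq> 0" using assms(2) by blast
  have "0 < (\<Sum>k\<le>n. - real_of_int (H j k) * v k)"
    by (rule sum_pos2[of _ k]) (use assms k in \<open>auto intro!: mult_nonpos_nonneg mult_pos_pos simp: less_le\<close>)
  then show ?thesis unfolding linform_def by (simp add: sum_negf)
qed



lemma segment_false:
  assumes fr: "friendly_pair H m n lam"
    and nd: "rows_nondegenerate H m n"
    and up: "\<forall>k\<le>n. u k > 0"
    and pos: "\<forall>i\<le>n. lam i * hmono H m n u i > 0"
    and wp: "\<forall>k\<le>n. w k > 0"
    and j0: "j0 < m"
    and sg: "linform H n u j0 * linform H n w j0 < 0"
    and gen: "\<forall>j<m. \<forall>k<m. j \<noteq> k \<longrightarrow>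
               linform H n u j * linform H n w k \<noteq> linform H n u k * linform H n w j"
  shows False
proof -
  define a where "a j = linform H n u j" for j
  define b where "b j = linform H n w j" for j
  have anz: "a j \<noteq> 0" if "j < m" for j
    using lin_u_nonzero[OF nd pos that] unfolding a_def .
  define r where "r j t = 1 + t * (b j / a j - 1)" for j t
  define x where "x t = (\<lambda>k. (1 - t) * u k + t * w k)" for t :: real
  have lx: "linform H n (x t) j = a j * r j t" if "j < m" for j t
    using anz[OF that] unfolding x_def r_def a_def b_def linform_lin
    by (simp add: field_simps)
  define T where "T = {t. 0 < t \<and> t \<le> 1 \<and> (\<exists>j<m. r j t = 0)}"
  have root: "t = a j / (a j - b j) \<and> a j \<noteq> b j" if "j < m" "r j t = 0" for j t
  proof -
    have "a j + t * (b j - a j) = 0" using that anz[OF that(1)] unfolding r_def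
      by (simp add: field_simps)
    moreover have ab: "a j \<noteq> b j"
    proof
      assume "a j = b j"
      with \<open>a j + t * (b j - a j) = 0\<close> have "a j = 0" by simp
      with anz[OF that(1)] show False by simp
    qed
    ultimately have "t * (a j - b j) = a j" by (simp add: algebra_simps)
    then have "t = a j / (a j - b j)" using ab by (simp add: eq_divide_eq)
    then show ?thesis using ab by simp
  qed
  have "T \<subseteq> (\<lambda>j. a j / (a j - b j)) ` {..<m}"
    unfolding T_def using root by blast
  then have finT: "finite T" using finite_surj by blast
  define t0 where "t0 = a j0 / (a j0 - b j0)"
  have sg': "a j0 * b j0 < 0" using sg unfolding a_def b_def .
  have cs: "(a j0 > 0 \<and> b j0 < 0) \<or> (a j0 < 0 \<and> b j0 > 0)"
    using sg' by (auto simp: mult_less_0_iff)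
  have t0: "0 < t0" "t0 < 1" "r j0 t0 = 0"
  proof -
    show "0 < t0" unfolding t0_def using cs
      by (auto intro: divide_pos_pos divide_neg_neg)
    show "t0 < 1" unfolding t0_def using cs
      by (auto simp: divide_less_eq)
    have "a j0 - b j0 \<noteq> 0" using cs by auto
    then show "r j0 t0 = 0" unfolding t0_def r_def using anz[OF j0]
      by (simp add: field_simps)
  qed
  have t0T: "t0 \<in> T" unfolding T_def using t0 j0 by auto
  define ts where "ts = Min T"
  have tsT: "ts \<in> T" unfolding ts_def using finT t0T Min_in by blast
  have tsle: "ts \<le> t" if "t \<in> T" for t unfolding ts_def using finT that by simp
  have ts01: "0 < ts" "ts < 1" using tsT tsle[OF t0T] t0 unfolding T_def by auto
  obtain j1 where j1: "j1 < m" "r j1 ts = 0" using tsT unfolding T_def by auto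
  have noneg: "False" if "j < m" "0 \<le> t" "t \<le> ts" "r j t < 0" for j t
  proof -
    have t: "0 < t" using that unfolding r_def by (cases "t = 0") auto
    define d where "d = b j / a j - 1"
    have d: "d < 0"
    proof (rule ccontr)
      assume "\<not> d < 0"
      then have "0 \<le> t * d" using t by simp
      then show False using that(4) unfolding r_def d_def by simp
    qed
    define t' where "t' = - 1 / d"
    have "r j t' = 0" unfolding r_def t'_def using d by (simp add: d_def[symmetric])
    moreover have "0 < t'" "t' < t" using d that t unfolding t'_def r_def d_def[symmetric]
      by (auto simp: field_simps)
    ultimately have "t' \<in> T" unfolding T_def using that ts01 by auto
    then show False using tsle \<open>t' < t\<close> \<open>t \<le> ts\<close> by fastforce
  qed
  have nozero: "False" if "j < m" "0 \<le> t" "t < ts" "r j t = 0" for j t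
  proof -
    have "0 < t" using that unfolding r_def by (cases "t = 0") auto
    then have "t \<in> T" unfolding T_def using that ts01 by auto
    then show False using tsle that by fastforce
  qed
  have rpos: "r j t > 0" if "j < m" "0 \<le> t" "t < ts" for j t
    using noneg[of j t] nozero[of j t] that by force
  have rts: "r j ts > 0" if "j < m" "j \<noteq> j1" for j
  proof -
    have "r j ts \<ge> 0" using noneg[of j ts] that ts01 by force
    moreover have "r j ts \<noteq> 0"
    proof
      assume z: "r j ts = 0"
      have e1: "(1 - ts) * a j + ts * b j = 0" using z anz[OF that(1)] unfolding r_def
        by (simp add: field_simps)
      have e2: "(1 - ts) * a j1 + ts * b j1 = 0" using j1 anz[OF j1(1)] unfolding r_def
        by (simp add: field_simps)
      have "b j = - ((1 - ts) / ts) * a j" "b j1 = - ((1 - ts) / ts) * a j1"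
        using e1 e2 ts01 by (auto simp: field_simps)
      then have "a j * b j1 = a j1 * b j" by simp
      then show False using gen that j1 unfolding a_def b_def by metis
    qed
    ultimately show ?thesis by simp
  qed
  have xts: "\<forall>k\<le>n. x ts k > 0" unfolding x_def using up wp ts01
  proof (intro allI impI)
    fix k assume k: "k \<le> n"
    have "0 < (1 - ts) * u k" using up k ts01 by simp
    moreover have "0 < ts * w k" using wp k ts01 by simp
    ultimately show "0 < (1 - ts) * u k + ts * w k" by simp
  qed
  have "linform H n (x ts) j1 = 0" using lx[OF j1(1)] j1 by simp
  obtain c where c: "c \<le> n" "H j1 c < 0"
  proof (rule ccontr)
    assume "\<not> thesis"
    with that have "\<forall>k\<le>n. H j1 k \<ge> 0" by force
    moreover have "\<exists>k\<le>n. H j1 k \<noteq> 0" using nd j1 unfolding rows_nondegenerate_def by blast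
    ultimately have "linform H n (x ts) j1 > 0" using row_pos xts by blast
    with \<open>linform H n (x ts) j1 = 0\<close> show False by simp
  qed
  have anz': "\<forall>j<m. linform H n u j \<noteq> 0" using anz unfolding a_def by blast
  have hm: "hmono H m n (x t) i = hmono H m n u i * (\<Prod>j<m. r j t powi H j i)" for t i
    unfolding hmono_scale[OF anz', of "x t" i]
    by (rule arg_cong[where f="\<lambda>z. _ * z"], rule prod.cong)
       (use lx anz in \<open>auto simp: a_def\<close>)
  have bound: "lam c * hmono H m n (x t) c \<le> 1" if "0 \<le> t" "t < ts" for t
  proof -
    have tp: "lam i * hmono H m n (x t) i > 0" if "i \<le> n" for i
    proof -
      have "0 < (\<Prod>j<m. r j t powi H j i)"
        using rpos \<open>0 \<le> t\<close> \<open>t < ts\<close> by (intro prod_pos) auto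
      then show ?thesis unfolding hm using pos that
        by (simp add: mult.assoc[symmetric])
    qed
    have "(\<Sum>i\<le>n. lam i * hmono H m n (x t) i) = 1"
      using fr lx rpos that anz unfolding friendly_pair_def
      by (metis less_numeral_extra(3) mult_eq_0_iff)
    moreover have "lam c * hmono H m n (x t) c \<le> (\<Sum>i\<le>n. lam i * hmono H m n (x t) i)"
      by (rule member_le_sum) (use c tp in \<open>auto intro: less_imp_le\<close>)
    ultimately show ?thesis by simp
  qed
  define K where "K = lam c * hmono H m n u c"
  have K: "K > 0" unfolding K_def using pos c by simp
  define S where "S = {..<m} - {j1}"
  define G where "G t = (\<Prod>j\<in>S. r j t powi H j c)" for t
  have r1: "r j1 t = 1 - t / ts" for t
  proof -
    have "b j1 / a j1 - 1 = - 1 / ts" using j1(2) ts01 unfolding r_def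
      by (simp add: field_simps)
    then show ?thesis unfolding r_def by simp
  qed
  have split: "(\<Prod>j<m. r j t powi H j c) = (1 - t / ts) powi H j1 c * G t" for t
    unfolding G_def S_def using j1 r1
    by (simp add: prod.remove)
  have Gts: "G ts > 0" unfolding G_def S_def using rts
    by (intro prod_pos) auto
  have Glim: "(G \<longlongrightarrow> G ts) (at_left ts)"
  proof -
    have "((\<lambda>t. r j t powi H j c) \<longlongrightarrow> r j ts powi H j c) (at_left ts)" if "j \<in> S" for j
    proof -
      have "((\<lambda>t. r j t) \<longlongrightarrow> r j ts) (at_left ts)" unfolding r_def
        by (intro tendsto_eq_intros) auto
      then show ?thesis by (rule tendsto_power_int) (use rts[of j] that in \<open>auto simp: S_def\<close>)
    qed
    then show ?thesis unfolding G_def by (rule tendsto_prod)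
  qed
  have ev1: "\<forall>\<^sub>F t in at_left ts. G t > G ts / 2"
    by (rule order_tendstoD(1)[OF Glim]) (use Gts in simp)
  have ylim: "((\<lambda>t. 1 - t / ts) \<longlongrightarrow> 0) (at_left ts)"
    using ts01 by (auto intro!: tendsto_eq_intros)
  have ev2: "\<forall>\<^sub>F t in at_left ts. 1 - t / ts < K * G ts / 2"
    by (rule order_tendstoD(2)[OF ylim]) (use K Gts in simp)
  have ev3: "\<forall>\<^sub>F t in at_left ts. t \<in> {0<..<ts}"
    by (rule eventually_at_left_real) (use ts01 in simp)
  have "\<forall>\<^sub>F t in at_left ts. G t > G ts / 2 \<and> 1 - t / ts < K * G ts / 2 \<and> t \<in> {0<..<ts}"
    using ev1 ev2 ev3 by eventually_elim auto
  then obtain t where t: "G t > G ts / 2" "1 - t / ts < K * G ts / 2" "0 < t" "t < ts"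
    using eventually_happens[of _ "at_left ts"] trivial_limit_at_left_real by fastforce
  define y where "y = 1 - t / ts"
  have y: "0 < y" "y < 1" using t ts01 unfolding y_def by (auto simp: field_simps)
  have py: "y powi H j1 c \<ge> 1 / y" by (rule powi_ge_inv) (use y c in auto)
  have "lam c * hmono H m n (x t) c = K * (y powi H j1 c * G t)"
    unfolding hm K_def split y_def by simp
  also have "\<dots> \<ge> K * ((1 / y) * (G ts / 2))"
    using K py t Gts y by (intro mult_left_mono mult_mono) auto
  finally have ge: "lam c * hmono H m n (x t) c \<ge> K * (G ts / 2) / y" by simp
  have "K * (G ts / 2) / y > 1" using t(2) y unfolding y_def[symmetric]
    by (simp add: field_simps)
  with ge bound[of t] t show False by linarith
qed



lemma generic_w:
  assumes nd: "rows_nondegenerate H m n"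
    and up: "\<forall>k\<le>n. u k > 0"
    and anz: "\<forall>j<m. linform H n u j \<noteq> 0"
    and j0: "j0 < m" and p: "p \<le> n" "H j0 p > 0" and q: "q \<le> n" "H j0 q < 0"
  shows "\<exists>w. (\<forall>k\<le>n. w k > 0) \<and> linform H n u j0 * linform H n w j0 < 0 \<and>
     (\<forall>j<m. \<forall>k<m. j \<noteq> k \<longrightarrow>
               linform H n u j * linform H n w k \<noteq> linform H n u k * linform H n w j)"
proof -
  define a where "a j = linform H n u j" for j
  define g where "g = (if a j0 > 0 then q else p)"
  define N where "N = \<bar>a j0\<bar> + 1"
  define w0 where "w0 = (\<lambda>k. u k + (if k = g then N else 0))"
  have gn: "g \<le> n" unfolding g_def using p q by auto
  have e1: "(\<Sum>k\<le>n. real_of_int (H j0 k) * (if k = g then N else 0)) =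
      (\<Sum>k\<le>n. if k = g then real_of_int (H j0 k) * N else 0)"
    by (rule sum.cong) auto
  have "linform H n w0 j0 = (\<Sum>k\<le>n. real_of_int (H j0 k) * u k) +
      (\<Sum>k\<le>n. real_of_int (H j0 k) * (if k = g then N else 0))"
    unfolding linform_def w0_def by (simp add: distrib_left sum.distrib)
  then have lw0: "linform H n w0 j0 = a j0 + real_of_int (H j0 g) * N"
    using gn unfolding a_def linform_def e1 by simp
  have sw0: "a j0 * linform H n w0 j0 < 0"
  proof (cases "a j0 > 0")
    case True
    then have "real_of_int (H j0 g) \<le> -1" using q unfolding g_def by simp
    then have "real_of_int (H j0 g) * N \<le> (-1) * N"
      by (rule mult_right_mono) (simp add: N_def)
    moreover have "N = a j0 + 1" using True N_def by simp
    ultimately have "linform H n w0 j0 < 0" using lw0 by linarith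
    then show ?thesis using True by (simp add: mult_pos_neg)
  next
    case False
    then have an: "a j0 < 0" using anz j0 unfolding a_def by force
    then have "real_of_int (H j0 g) \<ge> 1" using p False unfolding g_def by simp
    then have "1 * N \<le> real_of_int (H j0 g) * N"
      by (rule mult_right_mono) (simp add: N_def)
    moreover have "N = 1 - a j0" using an N_def by simp
    ultimately have "linform H n w0 j0 > 0" using lw0 by linarith
    then show ?thesis using an by (simp add: mult_neg_pos)
  qed
  have w0p: "w0 k > 0" if "k \<le> n" for k
    using up that unfolding w0_def N_def by auto
  define ws where "ws s = (\<lambda>k. w0 k + s * s ^ k)" for s :: real
  have lws: "linform H n (ws s) j = linform H n w0 j + s * (\<Sum>k\<le>n. real_of_int (H j k) * s ^ k)" for s j
    unfolding linform_def ws_def by (simp add: algebra_simps sum.distrib sum_distrib_left)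
  define c where "c j k i = a j * real_of_int (H k i) - a k * real_of_int (H j i)" for j k i
  define P where "P j k = pCons (a j * linform H n w0 k - a k * linform H n w0 j)
       (\<Sum>i\<le>n. monom (c j k i) i)" for j k
  have polyP: "poly (P j k) s = a j * linform H n (ws s) k - a k * linform H n (ws s) j" for j k s
    unfolding P_def lws c_def
    by (simp add: poly_sum poly_monom algebra_simps sum_distrib_left sum_subtractf sum.distrib)
  have Pnz: "P j k \<noteq> 0" if "j < m" "k < m" "j \<noteq> k" for j k
  proof -
    obtain i where i: "i \<le> n" "c j k i \<noteq> 0"
    proof (rule ccontr)
      assume "\<not> thesis"
      with that have z: "\<forall>i\<le>n. c j k i = 0" by blast
      have "\<forall>i\<le>n. real_of_int (H k i) = (a k / a j) * real_of_int (H j i)"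
      proof (intro allI impI)
        fix i assume "i \<le> n"
        then have "a j * real_of_int (H k i) = a k * real_of_int (H j i)"
          using z unfolding c_def by simp
        then show "real_of_int (H k i) = (a k / a j) * real_of_int (H j i)"
          using anz \<open>j < m\<close> unfolding a_def by (simp add: field_simps)
      qed
      then show False using nd \<open>j < m\<close> \<open>k < m\<close> \<open>j \<noteq> k\<close>
        unfolding rows_nondegenerate_def by blast
    qed
    have "coeff (P j k) (Suc i) = c j k i"
      unfolding P_def using i by (simp add: coeff_sum coeff_monom)
    then show ?thesis using i by auto
  qed
  define B where "B = (\<Union>jk\<in>{..<m} \<times> {..<m}.
      if fst jk \<noteq> snd jk then {s. poly (P (fst jk) (snd jk)) s = 0} else {})"
  have finB: "finite B" unfolding B_def
    by (intro finite_UN_I) (use Pnz in \<open>auto intro!: poly_roots_finite\<close>)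
  have flim: "((\<lambda>s. a j0 * linform H n (ws s) j0) \<longlongrightarrow> a j0 * linform H n w0 j0) (at_right 0)"
    unfolding lws by (auto intro!: tendsto_eq_intros)
  have "\<forall>\<^sub>F s in at_right 0. a j0 * linform H n (ws s) j0 < 0"
    by (rule order_tendstoD(2)[OF flim]) (use sw0 in simp)
  then obtain b where b: "b > 0" "\<And>s. s > 0 \<Longrightarrow> s < b \<Longrightarrow> a j0 * linform H n (ws s) j0 < 0"
    unfolding eventually_at_right_field by blast
  have "infinite ({0<..<b} - B)" using infinite_Ioo[OF b(1)] finB by (metis Diff_infinite_finite)
  then obtain s where s: "s \<in> {0<..<b}" "s \<notin> B"
    by (metis Diff_iff finite.emptyI ex_in_conv)
  show ?thesis
  proof (intro exI conjI allI impI)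
    fix k assume "k \<le> n" then show "ws s k > 0" unfolding ws_def using w0p s(1) by (simp add: add_pos_nonneg)
  next
    show "linform H n u j0 * linform H n (ws s) j0 < 0" using b s unfolding a_def by simp
  next
    fix j k assume jk: "j < m" "k < m" "j \<noteq> k"
    have "poly (P j k) s \<noteq> 0" using s(2) jk unfolding B_def by force
    then show "linform H n u j * linform H n (ws s) k \<noteq> linform H n u k * linform H n (ws s) j"
      unfolding polyP a_def by simp
  qed
qed



lemma no_mixed:
  assumes fr: "friendly_pair H m n lam" and nd: "rows_nondegenerate H m n"
    and up: "\<forall>k\<le>n. u k > 0" and pos: "\<forall>i\<le>n. lam i * hmono H m n u i > 0"
  shows "\<forall>j<m. (\<forall>k\<le>n. H j k \<ge> 0) \<or> (\<forall>k\<le>n. H j k \<le> 0)"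
proof (intro allI impI, rule ccontr)
  fix j0 assume j0: "j0 < m" and h: "\<not> ((\<forall>k\<le>n. H j0 k \<ge> 0) \<or> (\<forall>k\<le>n. H j0 k \<le> 0))"
  then obtain p q where p: "p \<le> n" "H j0 p > 0" and q: "q \<le> n" "H j0 q < 0"
    by (meson not_le)
  have anz: "\<forall>j<m. linform H n u j \<noteq> 0" using lin_u_nonzero[OF nd pos] by blast
  obtain w where w: "\<forall>k\<le>n. w k > 0" "linform H n u j0 * linform H n w j0 < 0"
    "\<forall>j<m. \<forall>k<m. j \<noteq> k \<longrightarrow>
               linform H n u j * linform H n w k \<noteq> linform H n u k * linform H n w j"
    using generic_w[OF nd up anz j0 p q] by blast
  show False by (rule segment_false[OF fr nd up pos w(1) j0 w(2) w(3)])
qed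

lemma sign_same:
  assumes nd: "rows_nondegenerate H m n"
    and rows: "\<forall>j<m. (\<forall>k\<le>n. H j k \<ge> 0) \<or> (\<forall>k\<le>n. H j k \<le> 0)"
    and up: "\<forall>k\<le>n. u k > 0" and vp: "\<forall>k\<le>n. v k > 0" and j: "j < m"
  shows "sgn (linform H n v j) = sgn (linform H n u j) \<and> linform H n v j \<noteq> 0
     \<and> linform H n v j / linform H n u j > 0"
proof -
  have nz: "\<exists>k\<le>n. H j k \<noteq> 0" using nd j unfolding rows_nondegenerate_def by blast
  show ?thesis
  proof (cases "\<forall>k\<le>n. H j k \<ge> 0")
    case True
    then have "linform H n v j > 0" "linform H n u j > 0" using row_pos nz up vp by blast+
    then show ?thesis by simp
  next
    case False
    then have "\<forall>k\<le>n. H j k \<le> 0" using rows j by blast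
    then have "linform H n v j < 0" "linform H n u j < 0" using row_neg nz up vp by blast+
    then show ?thesis by (simp add: divide_neg_neg)
  qed
qed

theorem corollary4p3:
  fixes H :: "nat \<Rightarrow> nat \<Rightarrow> int" and m n :: nat
    and lam u :: "nat \<Rightarrow> real"
  assumes "friendly_pair H m n lam"
    and "rows_nondegenerate H m n"
    and "\<forall>k\<le>n. u k > 0"
  shows "(horn_pair H m n lam \<longleftrightarrow> (\<forall>i\<le>n. lam i * hmono H m n u i > 0))
    \<and> (horn_pair H m n lam \<longrightarrow>
         (\<forall>j<m. (\<forall>k\<le>n. H j k \<ge> 0) \<or> (\<forall>k\<le>n. H j k \<le> 0))
       \<and> (\<forall>v. (\<forall>k\<le>n. v k > 0) \<longrightarrow>
            (\<forall>j<m. sgn (linform H n v j) = sgn (linform H n u j))))"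
proof -
  note fr = assms(1) and nd = assms(2) and up = assms(3)
  have h2p: "\<forall>i\<le>n. lam i * hmono H m n u i > 0" if "horn_pair H m n lam"
    using that up unfolding horn_pair_def by blast
  have p2h: "horn_pair H m n lam" if pos: "\<forall>i\<le>n. lam i * hmono H m n u i > 0"
  proof -
    have rows: "\<forall>j<m. (\<forall>k\<le>n. H j k \<ge> 0) \<or> (\<forall>k\<le>n. H j k \<le> 0)"
      by (rule no_mixed[OF fr nd up pos])
    have anz: "\<forall>j<m. linform H n u j \<noteq> 0" using lin_u_nonzero[OF nd pos] by blast
    show ?thesis unfolding horn_pair_def
    proof (intro conjI fr nd allI impI)
      fix v :: "nat \<Rightarrow> real" and i j assume vp: "\<forall>k\<le>n. v k > 0"
      assume "i \<le> n" "j < m" "H j i < 0"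
      then show "linform H n v j \<noteq> 0" using sign_same[OF nd rows up vp] by blast
    next
      fix v :: "nat \<Rightarrow> real" and i assume vp: "\<forall>k\<le>n. v k > 0" and i: "i \<le> n"
      have "0 < (\<Prod>j<m. (linform H n v j / linform H n u j) powi H j i)"
        using sign_same[OF nd rows up vp] by (intro prod_pos) auto
      then show "lam i * hmono H m n v i > 0"
        unfolding hmono_scale[OF anz, of v i] using pos i
        by (simp add: mult.assoc[symmetric])
    qed
  qed
  show ?thesis
  proof (intro conjI impI)
    show "horn_pair H m n lam \<longleftrightarrow> (\<forall>i\<le>n. lam i * hmono H m n u i > 0)"
      using h2p p2h by blast
  next
    assume "horn_pair H m n lam"
    then have pos: "\<forall>i\<le>n. lam i * hmono H m n u i > 0" by (rule h2p)
    show rows: "\<forall>j<m. (\<forall>k\<le>n. H j k \<ge> 0) \<or> (\<forall>k\<le>n. H j k \<le> 0)"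
      by (rule no_mixed[OF fr nd up pos])
    show "\<forall>v. (\<forall>k\<le>n. v k > 0) \<longrightarrow> (\<forall>j<m. sgn (linform H n v j) = sgn (linform H n u j))"
      using sign_same[OF nd rows up] by blast
  qed
qed

end
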